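(* Let $L_n$ and $PL_n$ be as in the context. Then (1) $PL_n$ is a subgroup of the commutator subgroup $L_n'$ for all $n\ge 2$; and (2) $PL_n$ is not a characteristic subgroup of $L_n$ for $n\ge 4$.
   Context: For $n\ge 2$, $L_n=\langle y_1,\dots,y_{n-1}\mid y_j^2=1\ (1\le j\le n-1),\ y_iy_{i+1}y_i=y_{i+1}y_iy_{i+1}\ (1\le i\le n-2)\rangle$ (no relations between $y_i,y_j$ with $|i-j|\ge 2$). Let $\pi:L_n\to S_n$ be the surjective homomorphism with $\pi(y_i)=(i\ i{+}1)$, the transposition, and $PL_n=\ker\pi$. *)

theory Defs
  imports "HOL-Algebra.Algebra"
begin

text \<open>Words in the generators y_1, ..., y_(n-1) are lists of indices in {1..<n}.
  Since every generator is an involution, no inverse letters are needed.\<close>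

definition words :: "nat \<Rightarrow> nat list set" where
  "words n = lists {1..<n}"

definition lstep :: "nat \<Rightarrow> nat list \<Rightarrow> nat list \<Rightarrow> bool" where
  "lstep n u v \<longleftrightarrow>
     (\<exists>a b i. 1 \<le> i \<and> i \<le> n - 1 \<and>
        ((u = a @ [i, i] @ b \<and> v = a @ b) \<or> (u = a @ b \<and> v = a @ [i, i] @ b)))
   \<or> (\<exists>a b i. 1 \<le> i \<and> i + 1 \<le> n - 1 \<and>
        ((u = a @ [i, i+1, i] @ b \<and> v = a @ [i+1, i, i+1] @ b) \<or>
         (u = a @ [i+1, i, i+1] @ b \<and> v = a @ [i, i+1, i] @ b)))"

definition lequiv :: "nat \<Rightarrow> (nat list \<times> nat list) set" where
  "lequiv n = {(u, v). u \<in> words n \<and> v \<in> words n \<and> (lstep n)\<^sup>*\<^sup>* u v}"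

definition L :: "nat \<Rightarrow> nat list set monoid" where
  "L n = \<lparr> carrier = words n // lequiv n,
           monoid.mult = (\<lambda>A B. lequiv n `` {(SOME a. a \<in> A) @ (SOME b. b \<in> B)}),
           one = lequiv n `` {[]} \<rparr>"

definition perm_of_word :: "nat list \<Rightarrow> nat \<Rightarrow> nat" where
  "perm_of_word w = foldr (\<lambda>i p. Transposition.transpose i (Suc i) \<circ> p) w id"

definition piL :: "nat \<Rightarrow> nat list set \<Rightarrow> nat \<Rightarrow> nat" where
  "piL n A = perm_of_word (SOME a. a \<in> A)"

definition PL :: "nat \<Rightarrow> nat list set set" where
  "PL n = kernel (L n) (sym_group n) (piL n)"

definition characteristic :: "'a set \<Rightarrow> ('a, 'b) monoid_scheme \<Rightarrow> bool" where
  "characteristic H G \<longleftrightarrow> subgroup H G \<and> (\<forall>\<phi> \<in> iso G G. \<phi> ` H = H)"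

end

theory Submission
  imports Defs "HOL-Combinatorics.Permutations"
begin


abbreviation eqv :: "nat \<Rightarrow> nat list \<Rightarrow> nat list \<Rightarrow> bool" where "eqv n \<equiv> (lstep n)\<^sup>*\<^sup>*"

definition cls :: "nat \<Rightarrow> nat list \<Rightarrow> nat list set" where "cls n w = lequiv n `` {w}"
definition rep :: "nat list set \<Rightarrow> nat list" where "rep A = (SOME a. a \<in> A)"

lemma lstep_sym: "lstep n u v \<Longrightarrow> lstep n v u"
  unfolding lstep_def by blast

lemma eqv_sym: "eqv n u v \<Longrightarrow> eqv n v u"
proof (induction rule: rtranclp_induct)
  case base then show ?case by simp
next
  case (step y z)
  then show ?case by (meson converse_rtranclp_into_rtranclp lstep_sym)
qed

lemma eqv_step: "lstep n u v \<Longrightarrow> eqv n v w \<Longrightarrow> eqv n u w"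
  by (rule converse_rtranclp_into_rtranclp)

lemma lstep_delI: "1 \<le> i \<Longrightarrow> i \<le> n - 1 \<Longrightarrow> u = a@[i,i]@b \<Longrightarrow> v = a@b \<Longrightarrow> lstep n u v"
  unfolding lstep_def by blast
lemma lstep_insI: "1 \<le> i \<Longrightarrow> i \<le> n - 1 \<Longrightarrow> u = a@b \<Longrightarrow> v = a@[i,i]@b \<Longrightarrow> lstep n u v"
  unfolding lstep_def by blast
lemma lstep_brI: "1 \<le> i \<Longrightarrow> i + 1 \<le> n - 1 \<Longrightarrow> u = a@[i,i+1,i]@b \<Longrightarrow> v = a@[i+1,i,i+1]@b \<Longrightarrow> lstep n u v"
  unfolding lstep_def by blast
lemma lstep_brI': "1 \<le> i \<Longrightarrow> i + 1 \<le> n - 1 \<Longrightarrow> u = a@[i+1,i,i+1]@b \<Longrightarrow> v = a@[i,i+1,i]@b \<Longrightarrow> lstep n u v"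
  unfolding lstep_def by blast

lemma lstep_cases:
  assumes "lstep n u v"
  obtains (del) a b i where "1 \<le> i" "i \<le> n - 1" "u = a@[i,i]@b" "v = a@b"
  | (ins) a b i where "1 \<le> i" "i \<le> n - 1" "u = a@b" "v = a@[i,i]@b"
  | (br) a b i where "1 \<le> i" "i + 1 \<le> n - 1" "u = a@[i,i+1,i]@b" "v = a@[i+1,i,i+1]@b"
  | (br') a b i where "1 \<le> i" "i + 1 \<le> n - 1" "u = a@[i+1,i,i+1]@b" "v = a@[i,i+1,i]@b"
  using assms unfolding lstep_def by blast

lemma lstep_ctx: assumes "lstep n u v" shows "lstep n (x@u@y) (x@v@y)"
  using assms
proof (cases rule: lstep_cases)
  case (del a b i) then show ?thesis by (intro lstep_delI[of i n _ "x@a" "b@y"]) auto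
next
  case (ins a b i) then show ?thesis by (intro lstep_insI[of i n _ "x@a" "b@y"]) auto
next
  case (br a b i) then show ?thesis by (intro lstep_brI[of i n _ "x@a" "b@y"]) auto
next
  case (br' a b i) then show ?thesis by (intro lstep_brI'[of i n _ "x@a" "b@y"]) auto
qed

lemma eqv_ctx: assumes "eqv n u v" shows "eqv n (x@u@y) (x@v@y)"
  using assms
proof (induction rule: rtranclp_induct)
  case base show ?case by (rule rtranclp.rtrancl_refl)
next
  case (step v1 v2)
  show ?case by (rule rtranclp.rtrancl_into_rtrancl[OF step.IH lstep_ctx[OF step.hyps(2)]])
qed

lemma eqv_app: assumes "eqv n u u'" "eqv n v v'" shows "eqv n (u@v) (u'@v')"
proof -
  have 1: "eqv n ([]@u@v) ([]@u'@v)" by (rule eqv_ctx[OF assms(1)])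
  have 2: "eqv n (u'@v@[]) (u'@v'@[])" by (rule eqv_ctx[OF assms(2)])
  have 3: "eqv n (u@v) (u'@v)" using 1 by (simp only: append_Nil)
  have 4: "eqv n (u'@v) (u'@v')" using 2 by (simp only: append_Nil2)
  show ?thesis by (rule rtranclp_trans[OF 3 4])
qed

lemma words_app[simp]: "u @ v \<in> words n \<longleftrightarrow> u \<in> words n \<and> v \<in> words n"
  by (auto simp: words_def)

lemma words_Cons[simp]: "a # v \<in> words n \<longleftrightarrow> 1 \<le> a \<and> a < n \<and> v \<in> words n"
  by (auto simp: words_def)

lemma words_Nil[simp]: "[] \<in> words n"
  by (auto simp: words_def)

lemma words_rev[simp]: "rev v \<in> words n \<longleftrightarrow> v \<in> words n"
  by (auto simp: words_def)

lemma lequiv_iff: "(u, v) \<in> lequiv n \<longleftrightarrow> u \<in> words n \<and> v \<in> words n \<and> eqv n u v"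
  by (simp add: lequiv_def)

lemma equiv_lequiv: "equiv (words n) (lequiv n)"
  unfolding equiv_def refl_on_def sym_def trans_def lequiv_def
  by (auto intro: eqv_sym rtranclp_trans)

lemma cls_eq: "u \<in> words n \<Longrightarrow> v \<in> words n \<Longrightarrow> eqv n u v \<Longrightarrow> cls n u = cls n v"
  unfolding cls_def by (rule equiv_class_eq[OF equiv_lequiv]) (simp add: lequiv_iff)

lemma cls_self: "u \<in> words n \<Longrightarrow> u \<in> cls n u"
  unfolding cls_def by (rule equiv_class_self[OF equiv_lequiv])

lemma carrier_L: "carrier (L n) = cls n ` words n"
  by (auto simp: L_def quotient_def cls_def)

lemma cls_in_carrier[simp]: "w \<in> words n \<Longrightarrow> cls n w \<in> carrier (L n)"
  by (simp add: carrier_L)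

lemma rep_cls: assumes "w \<in> words n" shows "rep (cls n w) \<in> words n" "eqv n (rep (cls n w)) w"
proof -
  have "rep (cls n w) \<in> cls n w" unfolding rep_def using cls_self[OF assms] by (rule someI)
  then have "(w, rep (cls n w)) \<in> lequiv n" by (simp add: cls_def)
  then have 1: "rep (cls n w) \<in> words n" and 2: "eqv n w (rep (cls n w))" by (simp_all add: lequiv_iff)
  show "rep (cls n w) \<in> words n" by (rule 1)
  show "eqv n (rep (cls n w)) w" by (rule eqv_sym[OF 2])
qed

lemma mult_cls: assumes "u \<in> words n" "v \<in> words n" shows "cls n u \<otimes>\<^bsub>L n\<^esub> cls n v = cls n (u @ v)"
proof -
  have "cls n u \<otimes>\<^bsub>L n\<^esub> cls n v = cls n (rep (cls n u) @ rep (cls n v))"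
    by (simp add: L_def rep_def cls_def)
  also have "\<dots> = cls n (u @ v)"
    using rep_cls[OF assms(1)] rep_cls[OF assms(2)] assms
    by (intro cls_eq) (simp_all add: eqv_app)
  finally show ?thesis .
qed

lemma one_L: "\<one>\<^bsub>L n\<^esub> = cls n []"
  by (simp add: L_def cls_def)

lemma rev_cancel: "w \<in> words n \<Longrightarrow> eqv n (rev w @ w) []"
proof (induction w)
  case Nil then show ?case by simp
next
  case (Cons a w)
  have "lstep n (rev w @ [a, a] @ w) (rev w @ w)"
    using Cons.prems by (intro lstep_delI[of a n _ "rev w" w]) auto
  moreover have "eqv n (rev w @ w) []" using Cons by simp
  ultimately show ?case by (simp add: eqv_step)
qed

lemma carrier_L_E: assumes "x \<in> carrier (L n)" obtains w where "w \<in> words n" "x = cls n w"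
  using assms unfolding carrier_L by blast

lemma group_L: "group (L n)"
proof (rule groupI)
  fix x y assume "x \<in> carrier (L n)" "y \<in> carrier (L n)"
  then obtain u v where "u \<in> words n" "x = cls n u" "v \<in> words n" "y = cls n v" by (metis carrier_L_E)
  then show "x \<otimes>\<^bsub>L n\<^esub> y \<in> carrier (L n)" by (simp only: mult_cls cls_in_carrier words_app)
next
  show "\<one>\<^bsub>L n\<^esub> \<in> carrier (L n)" unfolding one_L by (rule cls_in_carrier) (rule words_Nil)
next
  fix x y z assume "x \<in> carrier (L n)" "y \<in> carrier (L n)" "z \<in> carrier (L n)"
  then obtain u v w where "u \<in> words n" "x = cls n u" "v \<in> words n" "y = cls n v" "w \<in> words n" "z = cls n w"
    by (metis carrier_L_E)
  then show "x \<otimes>\<^bsub>L n\<^esub> y \<otimes>\<^bsub>L n\<^esub> z = x \<otimes>\<^bsub>L n\<^esub> (y \<otimes>\<^bsub>L n\<^esub> z)"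
    by (simp only: mult_cls words_app append_assoc simp_thms)
next
  fix x assume "x \<in> carrier (L n)"
  then obtain u where "u \<in> words n" "x = cls n u" by (metis carrier_L_E)
  then show "\<one>\<^bsub>L n\<^esub> \<otimes>\<^bsub>L n\<^esub> x = x" by (simp only: one_L mult_cls words_Nil append_Nil)
next
  fix x assume "x \<in> carrier (L n)"
  then obtain w where w: "w \<in> words n" "x = cls n w" by (metis carrier_L_E)
  have "cls n (rev w) \<otimes>\<^bsub>L n\<^esub> cls n w = cls n (rev w @ w)"
    using w by (intro mult_cls) simp_all
  also have "\<dots> = cls n []" using w by (intro cls_eq rev_cancel) simp_all
  finally have "cls n (rev w) \<otimes>\<^bsub>L n\<^esub> x = \<one>\<^bsub>L n\<^esub>" using w one_L by simp
  moreover have "cls n (rev w) \<in> carrier (L n)" using w by simp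
  ultimately show "\<exists>y\<in>carrier (L n). y \<otimes>\<^bsub>L n\<^esub> x = \<one>\<^bsub>L n\<^esub>" by blast
qed

lemma inv_cls: assumes "w \<in> words n" shows "inv\<^bsub>L n\<^esub> (cls n w) = cls n (rev w)"
proof (rule group.inv_equality[OF group_L])
  have "cls n (rev w) \<otimes>\<^bsub>L n\<^esub> cls n w = cls n (rev w @ w)"
    using assms by (intro mult_cls) simp_all
  also have "\<dots> = cls n []" using assms by (intro cls_eq rev_cancel) simp_all
  finally show "cls n (rev w) \<otimes>\<^bsub>L n\<^esub> cls n w = \<one>\<^bsub>L n\<^esub>" by (simp only: one_L)
  show "cls n w \<in> carrier (L n)" using assms by simp
  show "cls n (rev w) \<in> carrier (L n)" using assms by simp
qed



lemma perm_of_word_Cons[simp]: "perm_of_word (i # w) = Transposition.transpose i (Suc i) \<circ> perm_of_word w"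
  by (simp add: perm_of_word_def)
lemma perm_of_word_Nil[simp]: "perm_of_word [] = id"
  by (simp add: perm_of_word_def)
lemma perm_of_word_app[simp]: "perm_of_word (u @ v) = perm_of_word u \<circ> perm_of_word v"
  by (induction u) auto

lemma permutation_pow: "permutation (perm_of_word w)"
proof (induction w)
  case Nil show ?case by simp
next
  case (Cons a w)
  show ?case unfolding perm_of_word_Cons by (rule permutation_compose[OF permutation_swap_id Cons.IH])
qed

lemma evenperm_pow: "evenperm (perm_of_word w) \<longleftrightarrow> even (length w)"
proof (induction w)
  case Nil show ?case by simp
next
  case (Cons a w)
  have "evenperm (perm_of_word (a # w)) = (evenperm (Transposition.transpose a (Suc a)) = evenperm (perm_of_word w))"
    unfolding perm_of_word_Cons by (rule evenperm_comp[OF permutation_swap_id permutation_pow])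
  then show ?case using Cons.IH by (simp only: evenperm_swap) simp
qed

lemma pow_lstep: assumes "lstep n u v" shows "perm_of_word u = perm_of_word v"
  using assms
proof (cases rule: lstep_cases)
  case (del a b i) then show ?thesis by (auto simp: fun_eq_iff transpose_def)
next
  case (ins a b i) then show ?thesis by (auto simp: fun_eq_iff transpose_def)
next
  case (br a b i) then show ?thesis by (auto simp: fun_eq_iff transpose_def)
next
  case (br' a b i) then show ?thesis by (auto simp: fun_eq_iff transpose_def)
qed

lemma pow_eqv: "eqv n u v \<Longrightarrow> perm_of_word u = perm_of_word v"
  by (induction rule: rtranclp_induct) (auto dest: pow_lstep)

lemma piL_cls: "w \<in> words n \<Longrightarrow> piL n (cls n w) = perm_of_word w"
  unfolding piL_def rep_def[symmetric] using rep_cls pow_eqv by metis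

abbreviation DL where "DL n \<equiv> derived (L n) (carrier (L n))"

lemma D_sub: "subgroup (DL n) (L n)"
  by (rule group.derived_is_subgroup[OF group_L]) simp

lemma adj1: assumes "1 \<le> i" "i + 1 < n" shows "cls n [i, i+1] \<in> DL n"
proof -
  have w: "[i] \<in> words n" "[i,i+1] \<in> words n" using assms by auto
  have d: "cls n [i] \<otimes>\<^bsub>L n\<^esub> cls n [i,i+1] \<otimes>\<^bsub>L n\<^esub> inv\<^bsub>L n\<^esub> (cls n [i]) \<otimes>\<^bsub>L n\<^esub> inv\<^bsub>L n\<^esub> (cls n [i,i+1])
     \<in> derived_set (L n) (carrier (L n))"
    by (rule UN_I[OF cls_in_carrier[OF w(1)]], rule UN_I[OF cls_in_carrier[OF w(2)]], rule singletonI)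
  have e1: "cls n [i] \<otimes>\<^bsub>L n\<^esub> cls n [i,i+1] \<otimes>\<^bsub>L n\<^esub> inv\<^bsub>L n\<^esub> (cls n [i]) \<otimes>\<^bsub>L n\<^esub> inv\<^bsub>L n\<^esub> (cls n [i,i+1])
     = cls n [i,i,i+1,i,i+1,i]" using w by (simp add: inv_cls mult_cls)
  have e2: "cls n [i,i,i+1,i,i+1,i] = cls n [i,i+1]"
  proof (rule cls_eq)
    show "eqv n [i,i,i+1,i,i+1,i] [i,i+1]"
      apply (rule eqv_step[OF lstep_delI[of i n _ "[]" "[i+1,i,i+1,i]"]])
      using assms apply auto[4]
      apply (rule eqv_step[OF lstep_brI'[of i n _ "[]" "[i]"]])
      using assms apply auto[4]
      apply (rule eqv_step[OF lstep_delI[of i n _ "[i,i+1]" "[]"]])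
      using assms by auto
  qed (use assms in simp_all)
  have "cls n [i,i+1] \<in> derived_set (L n) (carrier (L n))" using d unfolding e1 e2 .
  then show ?thesis unfolding derived_def by (rule generate.incl)
qed

lemma adj2: assumes "1 \<le> i" "i + 1 < n" shows "cls n [i+1, i] \<in> DL n"
proof -
  have "inv\<^bsub>L n\<^esub> (cls n [i, i+1]) \<in> DL n" by (rule subgroup.m_inv_closed[OF D_sub adj1[OF assms]])
  moreover have "inv\<^bsub>L n\<^esub> (cls n [i, i+1]) = cls n [i+1, i]" using assms by (subst inv_cls) simp_all
  ultimately show ?thesis by simp
qed

lemma glue: "i \<in> {1..<n} \<Longrightarrow> j \<in> {1..<n} \<Longrightarrow> k \<in> {1..<n} \<Longrightarrow>
   cls n [i,k] \<otimes>\<^bsub>L n\<^esub> cls n [k,j] = cls n [i,j]"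
  apply (simp add: mult_cls)
  apply (rule cls_eq)
    apply auto[2]
  apply (rule eqv_step[OF lstep_delI[of k n _ "[i]" "[j]"]])
  by auto

lemma one_j: "1 \<le> j \<Longrightarrow> j < n \<Longrightarrow> cls n [1, j] \<in> DL n"
proof (induction j rule: nat_induct_at_least)
  case base
  have "cls n [1,1] = \<one>\<^bsub>L n\<^esub>" unfolding one_L
    by (rule cls_eq) (use base in \<open>auto intro: eqv_step[OF lstep_delI[of 1 n _ "[]" "[]"]]\<close>)
  then show ?case using D_sub subgroup.one_closed by metis
next
  case (Suc j)
  have "cls n [1, Suc j] = cls n [1,j] \<otimes>\<^bsub>L n\<^esub> cls n [j, j+1]" using Suc by (simp add: glue)
  moreover have "cls n [1,j] \<in> DL n" using Suc by simp
  moreover have "cls n [j, j+1] \<in> DL n" using Suc by (intro adj1) simp_all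
  ultimately show ?case using subgroup.m_closed[OF D_sub] by simp
qed

lemma i_one: "1 \<le> j \<Longrightarrow> j < n \<Longrightarrow> cls n [j, 1] \<in> DL n"
proof (induction j rule: nat_induct_at_least)
  case base
  have "cls n [1,1] = \<one>\<^bsub>L n\<^esub>" unfolding one_L
    by (rule cls_eq) (use base in \<open>auto intro: eqv_step[OF lstep_delI[of 1 n _ "[]" "[]"]]\<close>)
  then show ?case using D_sub subgroup.one_closed by metis
next
  case (Suc j)
  have "cls n [Suc j, 1] = cls n [j+1,j] \<otimes>\<^bsub>L n\<^esub> cls n [j, 1]" using Suc by (simp add: glue)
  moreover have "cls n [j,1] \<in> DL n" using Suc by simp
  moreover have "cls n [j+1, j] \<in> DL n" using Suc by (intro adj2) simp_all
  ultimately show ?case using subgroup.m_closed[OF D_sub] by simp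
qed

lemma pair_D: "i \<in> {1..<n} \<Longrightarrow> j \<in> {1..<n} \<Longrightarrow> cls n [i, j] \<in> DL n"
proof -
  assume a: "i \<in> {1..<n}" "j \<in> {1..<n}"
  then have "cls n [i, j] = cls n [i,1] \<otimes>\<^bsub>L n\<^esub> cls n [1, j]" by (simp add: glue)
  moreover have "cls n [i,1] \<in> DL n" "cls n [1,j] \<in> DL n" using a by (intro i_one one_j; simp)+
  ultimately show ?thesis using subgroup.m_closed[OF D_sub] by simp
qed

lemma even_D: "w \<in> words n \<Longrightarrow> even (length w) \<Longrightarrow> cls n w \<in> DL n"
proof (induction w rule: induct_list012)
  case 1 then show ?case using D_sub subgroup.one_closed one_L by metis
next
  case (2 x) then show ?case by simp
next
  case (3 x y zs)
  then have "cls n (x # y # zs) = cls n [x,y] \<otimes>\<^bsub>L n\<^esub> cls n zs" by (simp add: mult_cls)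
  moreover have "cls n [x,y] \<in> DL n" using 3 by (intro pair_D) simp_all
  moreover have "cls n zs \<in> DL n" using 3 by simp
  ultimately show ?case using subgroup.m_closed[OF D_sub] by simp
qed

lemma part1: "PL n \<subseteq> DL n"
proof
  fix A assume "A \<in> PL n"
  then have A: "A \<in> carrier (L n)" "piL n A = id" by (auto simp: PL_def kernel_def sym_group_def)
  then obtain w where w: "w \<in> words n" "A = cls n w" by (auto simp: carrier_L)
  then have "perm_of_word w = id" using A piL_cls by simp
  then have "even (length w)" using evenperm_pow by (metis evenperm_id)
  then show "A \<in> DL n" using w even_D by simp
qed



lemma eqv_refl[simp]: "eqv n u u" by (rule rtranclp.rtrancl_refl)

definition fl :: "nat \<Rightarrow> nat list" where "fl i = (if i = 1 then [2,1,2] else [i])"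
definition FW :: "nat list \<Rightarrow> nat list" where "FW w = concat (map fl w)"
definition Phi :: "nat \<Rightarrow> nat list set \<Rightarrow> nat list set" where "Phi n A = cls n (FW (rep A))"

lemma FW_simps[simp]: "FW [] = []" "FW (a # w) = fl a @ FW w" "FW (u @ v) = FW u @ FW v"
  by (auto simp: FW_def)

lemma w_ff: "3 \<le> (n::nat) \<Longrightarrow> eqv n [2,1,2,2,1,2] []"
    apply (rule eqv_step[OF lstep_delI[of 2 n _ "[2,1]" "[1,2]"]], simp_all)
    apply (rule eqv_step[OF lstep_delI[of 1 n _ "[2]" "[2]"]], simp_all)
    apply (rule eqv_step[OF lstep_delI[of 2 n _ "[]" "[]"]], simp_all)
  by (rule rtranclp.rtrancl_refl)

lemma w_a: "3 \<le> (n::nat) \<Longrightarrow> eqv n [2,1,2,2,2,1,2] [1]"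
    apply (rule eqv_step[OF lstep_delI[of 2 n _ "[2,1]" "[2,1,2]"]], simp_all)
    apply (rule eqv_step[OF lstep_brI'[of 1 n _ "[]" "[1,2]"]], simp_all)
    apply (rule eqv_step[OF lstep_delI[of 1 n _ "[1,2]" "[2]"]], simp_all)
    apply (rule eqv_step[OF lstep_delI[of 2 n _ "[1]" "[]"]], simp_all)
    by (rule rtranclp.rtrancl_refl)

lemma w_b: "3 \<le> (n::nat) \<Longrightarrow> eqv n [2,2,1,2,2] [1]"
    apply (rule eqv_step[OF lstep_delI[of 2 n _ "[]" "[1,2,2]"]], simp_all)
    apply (rule eqv_step[OF lstep_delI[of 2 n _ "[1]" "[]"]], simp_all)
    by (rule rtranclp.rtrancl_refl)

lemma fl_ff: assumes "1 \<le> i" "i \<le> n - 1" "3 \<le> n" shows "eqv n (fl i @ fl i) []"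
proof (cases "i = 1")
  case True
  show ?thesis using True w_ff[OF assms(3)] by (simp add: fl_def)
next
  case False
  then show ?thesis using assms by (auto simp: fl_def intro: eqv_step[OF lstep_delI[of i n _ "[]" "[]"]])
qed

lemma fl_br: assumes "1 \<le> i" "i + 1 \<le> n - 1" "3 \<le> n"
  shows "eqv n (fl i @ fl (i+1) @ fl i) (fl (i+1) @ fl i @ fl (i+1))"
proof (cases "i = 1")
  case True
  have a: "eqv n [2,1,2,2,2,1,2] [1]" by (rule w_a[OF assms(3)])
  have b: "eqv n [2,2,1,2,2] [1]" by (rule w_b[OF assms(3)])
  have e1: "fl i @ fl (i+1) @ fl i = [2,1,2,2,2,1,2]" unfolding True by (simp add: fl_def)
  have e2: "fl (i+1) @ fl i @ fl (i+1) = [2,2,1,2,2]" unfolding True by (simp add: fl_def)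
  show ?thesis unfolding e1 e2 by (rule rtranclp_trans[OF a eqv_sym[OF b]])
next
  case False
  then have e: "fl i = [i]" "fl (i+1) = [i+1]" using assms by (simp_all add: fl_def)
  show ?thesis unfolding e
    by (rule r_into_rtranclp, rule lstep_brI[of i n _ "[]" "[]"]) (use assms in simp_all)
qed

lemma FW_lstep: assumes "lstep n u v" "3 \<le> n" shows "eqv n (FW u) (FW v)"
  using assms(1)
proof (cases rule: lstep_cases)
  case (del a b i) then show ?thesis using eqv_ctx[OF fl_ff[of i n], of "FW a" "FW b"] assms by simp
next
  case (ins a b i) then show ?thesis using eqv_sym[OF eqv_ctx[OF fl_ff[of i n], of "FW a" "FW b"]] assms by simp
next
  case (br a b i) then show ?thesis using eqv_ctx[OF fl_br[of i n], of "FW a" "FW b"] assms by simp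
next
  case (br' a b i) then show ?thesis using eqv_sym[OF eqv_ctx[OF fl_br[of i n], of "FW a" "FW b"]] assms by simp
qed

lemma FW_eqv: assumes "eqv n u v" "3 \<le> n" shows "eqv n (FW u) (FW v)"
  using assms(1)
proof (induction rule: rtranclp_induct)
  case base show ?case by (rule rtranclp.rtrancl_refl)
next
  case (step v1 v2)
  show ?case by (rule rtranclp_trans[OF step.IH FW_lstep[OF step.hyps(2) assms(2)]])
qed

lemma FW_words: "w \<in> words n \<Longrightarrow> 3 \<le> n \<Longrightarrow> FW w \<in> words n"
  by (induction w) (auto simp: fl_def)

lemma FW_FW: "w \<in> words n \<Longrightarrow> 3 \<le> n \<Longrightarrow> eqv n (FW (FW w)) w"
proof (induction w)
  case Nil then show ?case by simp
next
  case (Cons a w)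
  have "eqv n (FW (fl a)) [a]"
  proof (cases "a = 1")
    case True
    then show ?thesis using w_b[of n] Cons.prems by (simp add: fl_def)
  qed (simp add: fl_def)
  then show ?case using Cons eqv_app[of n "FW (fl a)" "[a]"] by simp
qed

lemma Phi_cls: "w \<in> words n \<Longrightarrow> 3 \<le> n \<Longrightarrow> Phi n (cls n w) = cls n (FW w)"
  unfolding Phi_def
proof (rule cls_eq)
  assume "w \<in> words n" "3 \<le> n"
  then show "FW (rep (cls n w)) \<in> words n" "FW w \<in> words n" "eqv n (FW (rep (cls n w))) (FW w)"
    by (simp_all add: FW_words rep_cls FW_eqv)
qed

lemma Phi_carrier: "A \<in> carrier (L n) \<Longrightarrow> 3 \<le> n \<Longrightarrow> Phi n A \<in> carrier (L n)"
  by (auto simp: carrier_L Phi_cls FW_words)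

lemma Phi_Phi: assumes "A \<in> carrier (L n)" "3 \<le> n" shows "Phi n (Phi n A) = A"
proof -
  obtain w where w: "w \<in> words n" "A = cls n w" using assms(1) by (rule carrier_L_E)
  have "Phi n (Phi n A) = cls n (FW (FW w))" using w assms(2) by (simp add: Phi_cls FW_words)
  also have "\<dots> = cls n w" using w assms(2) by (intro cls_eq FW_FW FW_words) simp_all
  finally show ?thesis using w by simp
qed

lemma Phi_mult: assumes "x \<in> carrier (L n)" "y \<in> carrier (L n)" "3 \<le> n"
  shows "Phi n (x \<otimes>\<^bsub>L n\<^esub> y) = Phi n x \<otimes>\<^bsub>L n\<^esub> Phi n y"
proof -
  obtain u where u: "u \<in> words n" "x = cls n u" using assms(1) by (rule carrier_L_E)
  obtain v where v: "v \<in> words n" "y = cls n v" using assms(2) by (rule carrier_L_E)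
  have fu: "FW u \<in> words n" and fv: "FW v \<in> words n" using u v assms(3) by (simp_all add: FW_words)
  have "Phi n (x \<otimes>\<^bsub>L n\<^esub> y) = cls n (FW (u @ v))"
    using u v assms(3) by (simp add: mult_cls Phi_cls)
  also have "\<dots> = cls n (FW u) \<otimes>\<^bsub>L n\<^esub> cls n (FW v)" using fu fv by (simp add: mult_cls)
  also have "\<dots> = Phi n x \<otimes>\<^bsub>L n\<^esub> Phi n y" using u v assms(3) by (simp add: Phi_cls)
  finally show ?thesis .
qed

lemma Phi_iso: assumes "3 \<le> n" shows "Phi n \<in> iso (L n) (L n)"
  unfolding iso_def hom_def
proof (intro CollectI conjI)
  show "Phi n \<in> carrier (L n) \<rightarrow> carrier (L n)" using Phi_carrier assms by blast
  show "\<forall>x\<in>carrier (L n). \<forall>y\<in>carrier (L n). Phi n (x \<otimes>\<^bsub>L n\<^esub> y) = Phi n x \<otimes>\<^bsub>L n\<^esub> Phi n y"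
    using Phi_mult assms by blast
  show "bij_betw (Phi n) (carrier (L n)) (carrier (L n))"
    by (rule bij_betw_byWitness[where f'="Phi n"]) (use Phi_carrier Phi_Phi assms in auto)
qed

lemma part2: assumes "4 \<le> n" shows "\<not> characteristic (PL n) (L n)"
proof
  assume "characteristic (PL n) (L n)"
  then have eq: "Phi n ` PL n = PL n" using Phi_iso assms unfolding characteristic_def by auto
  have w: "[1,3,1,3] \<in> words n" using assms by simp
  have "cls n [1,3,1,3] \<in> PL n"
    using w by (auto simp: PL_def kernel_def sym_group_def piL_cls fun_eq_iff transpose_def)
  then have "Phi n (cls n [1,3,1,3]) \<in> PL n" using eq by blast
  then have "piL n (cls n (FW [1,3,1,3])) = id" using w assms
    by (auto simp: PL_def kernel_def sym_group_def Phi_cls)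
  moreover have "FW [1,3,1,3] \<in> words n" using w assms by (intro FW_words) simp_all
  ultimately have "perm_of_word (FW [1,3,1,3]) = id" by (simp add: piL_cls)
  then have "perm_of_word (FW [1,3,1,3]) 4 = 4" by simp
  then show False by (simp add: fl_def transpose_def)
qed

theorem proposition5p1:
  shows "(\<forall>n::nat. n \<ge> 2 \<longrightarrow> PL n \<subseteq> derived (L n) (carrier (L n)))
       \<and> (\<forall>n::nat. n \<ge> 4 \<longrightarrow> \<not> characteristic (PL n) (L n))"
  using part1 part2 by blast

end
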